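(* Let $\mathcal{X},\mathcal{Y}$ be finite, $P_X$ a distribution on $\mathcal{X}$, $P_{Y|X}$ a channel, $P_{XY}=P_XP_{Y|X}$, $R\ge0$, and $M=\exp(nR)$. For a joint $n$-type $Q_{\bar X\bar Y}$ let $(\bar X,\bar Y)\sim Q_{\bar X\bar Y}$ and $Q_{\bar Y}$ its $\mathcal{Y}$-marginal. Then \[ \lim_{n\to\infty}-\frac1n\log\max_{Q_{\bar X\bar Y}\in\mathcal{P}_n(\mathcal{X}\times\mathcal{Y})}\Big\{\tfrac12\big|\mathcal{T}^n_{Q_{\bar Y}}\big|\exp\big(-n\,\mathbb{E}[\imath_{P_{Y|X}}(\bar Y|\bar X)]\big)\mathfrak{Y}(M,Q_{\bar X\bar Y})\Big\} =\inf_{Q_{\bar X\bar Y}\in\mathcal{P}_\infty(\mathcal{X}\times\mathcal{Y})}\Big\{D(Q_{\bar X\bar Y}\|P_{XY})+\tfrac12\big[R-D(Q_{\bar X\bar Y}\|P_XQ_{\bar Y})\big]_+\Big\}, \] where $\mathcal{P}_\infty(\mathcal{X}\times\mathcal{Y})=\bigcup_{n\ge1}\mathcal{P}_n(\mathcal{X}\times\mathcal{Y})$ and $[f]_+=\max\{0,f\}$.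
   Context: Logs and exps use a common base; $D$ is relative entropy; $\imath_{P_{Y|X}}(y|x)=\log\frac1{P_{Y|X}(y|x)}$. $\mathcal{P}_n(\mathcal{X}\times\mathcal{Y})$ is the set of joint $n$-types and $\mathcal{T}^n_{Q_{\bar Y}}$ is the type class of $Q_{\bar Y}$. For $y^n\in\mathcal{T}^n_{Q_{\bar Y}}$, let $\mathcal{T}^n_{Q_{\bar X|\bar Y}}(y^n)$ be the set of $x^n$ whose joint empirical distribution with $y^n$ is $Q_{\bar X\bar Y}$, $p_{Q_{\bar X|\bar Y}}(y^n)=\mathbb{P}[X^n\in\mathcal{T}^n_{Q_{\bar X|\bar Y}}(y^n)]$ with $X^n$ i.i.d. $P_X$ (depending on $y^n$ only through its type), and $\mathfrak{Y}(M,Q_{\bar X\bar Y})=\min\{2p_{Q_{\bar X|\bar Y}}(y^n),M^{-1/2}p_{Q_{\bar X|\bar Y}}^{1/2}(y^n)\}$. *)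

theory Defs
  imports Complex_Main "HOL-Library.Extended_Real"
begin

definition is_dist :: "('a::finite \<Rightarrow> real) \<Rightarrow> bool" where
  "is_dist P \<longleftrightarrow> (\<forall>a. P a \<ge> 0) \<and> sum P UNIV = 1"

definition joint :: "('x \<Rightarrow> real) \<Rightarrow> ('x \<Rightarrow> 'y \<Rightarrow> real) \<Rightarrow> ('x \<times> 'y \<Rightarrow> real)" where
  "joint PX W = (\<lambda>(a,b). PX a * W a b)"

definition marg_Y :: "('x::finite \<times> 'y \<Rightarrow> real) \<Rightarrow> ('y \<Rightarrow> real)" where
  "marg_Y Q = (\<lambda>b. \<Sum>a\<in>UNIV. Q (a,b))"

definition prod_dist :: "('x \<Rightarrow> real) \<Rightarrow> ('y \<Rightarrow> real) \<Rightarrow> ('x \<times> 'y \<Rightarrow> real)" where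
  "prod_dist P Q = (\<lambda>(a,b). P a * Q b)"

definition n_types :: "nat \<Rightarrow> ('a::finite \<Rightarrow> real) set" where
  "n_types n = {Q. (\<forall>a. Q a \<ge> 0) \<and> sum Q UNIV = 1 \<and>
                    (\<forall>a. \<exists>k::nat. Q a = real k / real n)}"

definition types_infty :: "('a::finite \<Rightarrow> real) set" where
  "types_infty = (\<Union>n\<in>{1..}. n_types n)"

definition tclass :: "nat \<Rightarrow> ('a \<Rightarrow> real) \<Rightarrow> 'a list set" where
  "tclass n q = {ys. length ys = n \<and> (\<forall>b. real (count_list ys b) = real n * q b)}"

definition cond_tclass :: "nat \<Rightarrow> ('x \<times> 'y \<Rightarrow> real) \<Rightarrow> 'y list \<Rightarrow> 'x list set" where
  "cond_tclass n Q ys = {xs. length xs = n \<and>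
      (\<forall>ab. real (count_list (zip xs ys) ab) = real n * Q ab)}"

text \<open>p_{Q_{X|Y}}(y^n) = P[X^n \<in> T_{Q_{X|Y}}(y^n)], X^n i.i.d. P_X; evaluated at a
  representative y^n of the type class of the Y-marginal (the value does not depend on
  the choice).\<close>
definition cond_type_prob :: "nat \<Rightarrow> ('x::finite \<Rightarrow> real) \<Rightarrow> ('x \<times> 'y::finite \<Rightarrow> real) \<Rightarrow> real" where
  "cond_type_prob n PX Q =
     (let ys = (SOME ys. ys \<in> tclass n (marg_Y Q))
      in \<Sum>xs\<in>cond_tclass n Q ys. prod_list (map PX xs))"

definition frakY :: "real \<Rightarrow> nat \<Rightarrow> ('x::finite \<Rightarrow> real) \<Rightarrow> ('x \<times> 'y::finite \<Rightarrow> real) \<Rightarrow> real" where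
  "frakY M n PX Q = min (2 * cond_type_prob n PX Q) (M powr (-1/2) * sqrt (cond_type_prob n PX Q))"

definition info_dens :: "('x \<Rightarrow> 'y \<Rightarrow> real) \<Rightarrow> 'x \<Rightarrow> 'y \<Rightarrow> ereal" where
  "info_dens W a b = (if W a b = 0 then \<infinity> else ereal (ln (1 / W a b)))"

text \<open>E[i(Ybar|Xbar)] for (Xbar,Ybar) ~ Q (convention 0 * \<infinity> = 0).\<close>
definition exp_info :: "('x \<Rightarrow> 'y \<Rightarrow> real) \<Rightarrow> ('x::finite \<times> 'y::finite \<Rightarrow> real) \<Rightarrow> ereal" where
  "exp_info W Q = (\<Sum>ab\<in>{ab. Q ab > 0}. ereal (Q ab) * info_dens W (fst ab) (snd ab))"

definition exp_neg :: "real \<Rightarrow> ereal \<Rightarrow> real" where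
  "exp_neg t e = (if e = \<infinity> then 0 else exp (- t * real_of_ereal e))"

definition rel_ent :: "('a::finite \<Rightarrow> real) \<Rightarrow> ('a \<Rightarrow> real) \<Rightarrow> ereal" where
  "rel_ent Q P = (\<Sum>a\<in>{a. Q a > 0}. if P a = 0 then \<infinity> else ereal (Q a * ln (Q a / P a)))"

end

theory Submission
  imports Defs "HOL-Library.FuncSet"
begin

lemma count_zip_fst: "length xs = length ys \<Longrightarrow> count_list xs a = (\<Sum>b\<in>(UNIV::'y::finite set). count_list (zip xs ys) (a,b))"
proof (induction xs arbitrary: ys)
  case Nil then show ?case by simp
next
  case (Cons x xs)
  then obtain y ys' where ys: "ys = y # ys'" and l: "length xs = length ys'" by (cases ys) auto
  have "(\<Sum>b\<in>(UNIV::'y set). count_list (zip (x#xs) ys) (a,b)) = (\<Sum>b\<in>UNIV. count_list (zip xs ys') (a,b) + (if (x,y) = (a,b) then 1 else 0))"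
    by (auto simp: ys intro!: sum.cong)
  also have "\<dots> = count_list xs a + (if x = a then 1 else 0)"
    by (simp add: sum.distrib Cons.IH[OF l])
  finally show ?case by simp
qed

lemma count_zip_snd: "length xs = length ys \<Longrightarrow> count_list ys b = (\<Sum>a\<in>(UNIV::'x::finite set). count_list (zip xs ys) (a,b))"
proof (induction xs arbitrary: ys)
  case Nil then show ?case by simp
next
  case (Cons x xs)
  then obtain y ys' where ys: "ys = y # ys'" and l: "length xs = length ys'" by (cases ys) auto
  have "(\<Sum>a\<in>(UNIV::'x set). count_list (zip (x#xs) ys) (a,b)) = (\<Sum>a\<in>UNIV. count_list (zip xs ys') (a,b) + (if (x,y) = (a,b) then 1 else 0))"
    by (auto simp: ys intro!: sum.cong)
  also have "\<dots> = count_list ys' b + (if y = b then 1 else 0)"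
    by (simp add: sum.distrib Cons.IH[OF l])
  finally show ?case by (simp add: ys)
qed

lemma prod_list_count: "prod_list (map f xs) = (\<Prod>a\<in>(UNIV::'a::finite set). (f a :: 'b::comm_monoid_mult) ^ count_list xs a)"
proof (induction xs)
  case Nil then show ?case by simp
next
  case (Cons x xs)
  have "(\<Prod>a\<in>(UNIV::'a set). f a ^ count_list (x#xs) a) = (\<Prod>a\<in>UNIV. f a ^ count_list xs a * f a ^ (if x = a then 1 else 0))"
    by (intro prod.cong) (auto simp: power_add ac_simps)
  also have "\<dots> = (\<Prod>a\<in>UNIV. f a ^ count_list xs a) * f x"
    by (simp add: prod.distrib if_distrib[of "\<lambda>e. f _ ^ e"] prod.If_cases cong: if_cong)
  finally show ?case by (simp add: Cons.IH ac_simps)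
qed

lemma prod_remove_UNIV: "(\<Prod>z\<in>(UNIV::'a::finite set). f z) = f z0 * (\<Prod>z\<in>UNIV-{z0}. f z)"
  by (simp add: prod.remove)

lemma sum_remove_UNIV: "(\<Sum>z\<in>(UNIV::'a::finite set). f z) = f z0 + (\<Sum>z\<in>UNIV-{z0}. f z)"
  by (simp add: sum.remove)

lemma card_cond_class:
  fixes ys :: "'y::finite list"
  shows "\<forall>k :: 'x::finite \<times> 'y \<Rightarrow> nat. (\<forall>b. (\<Sum>a\<in>UNIV. k (a,b)) = count_list ys b) \<longrightarrow>
     card {xs. length xs = length ys \<and> (\<forall>ab. count_list (zip xs ys) ab = k ab)} * (\<Prod>ab\<in>UNIV. fact (k ab))
     = (\<Prod>b\<in>UNIV. fact (count_list ys b) :: nat)"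
proof (induction ys)
  case Nil
  show ?case
  proof (intro allI impI)
    fix k :: "'x \<times> 'y \<Rightarrow> nat"
    assume "\<forall>b. (\<Sum>a\<in>UNIV. k (a,b)) = count_list [] b"
    then have k0: "k ab = 0" for ab by (cases ab) auto
    have "{xs. length xs = length ([]::'y list) \<and> (\<forall>ab. count_list (zip xs []) ab = k ab)} = {[]}"
      using k0 by auto
    then show "card {xs. length xs = length ([]::'y list) \<and> (\<forall>ab. count_list (zip xs []) ab = k ab)} * (\<Prod>ab\<in>UNIV. fact (k ab))
     = (\<Prod>b\<in>UNIV. fact (count_list ([]::'y list) b))" using k0 by simp
  qed
next
  case (Cons y ys)
  show ?case
  proof (intro allI impI)
    fix k :: "'x \<times> 'y \<Rightarrow> nat"
    assume hk: "\<forall>b. (\<Sum>a\<in>UNIV. k (a,b)) = count_list (y#ys) b"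
    define T where "T = (\<lambda>k'::'x \<times> 'y \<Rightarrow> nat. {xs. length xs = length ys \<and> (\<forall>ab. count_list (zip xs ys) ab = k' ab)})"
    define kk where "kk = (\<lambda>a. k((a,y) := k (a,y) - 1))"
    define A where "A = {a. k (a,y) > 0}"
    define P where "P = (\<lambda>k'::'x \<times> 'y \<Rightarrow> nat. \<Prod>ab\<in>UNIV. (fact (k' ab) :: nat))"
    define Rr where "Rr = (\<Prod>b\<in>UNIV. (fact (count_list ys b) :: nat))"
    have finT: "finite (T k')" for k'
      by (rule finite_subset[OF _ finite_lists_length_eq[OF finite_UNIV, of "length ys"]]) (auto simp: T_def)
    have Seq: "{xs. length xs = length (y#ys) \<and> (\<forall>ab. count_list (zip xs (y#ys)) ab = k ab)} = (\<Union>a\<in>A. (Cons a) ` T (kk a))"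
    proof (intro equalityI subsetI)
      fix xs assume "xs \<in> {xs. length xs = length (y#ys) \<and> (\<forall>ab. count_list (zip xs (y#ys)) ab = k ab)}"
      then obtain a xs' where xs: "xs = a # xs'" "length xs' = length ys"
        and c: "\<forall>ab. count_list (zip (a#xs') (y#ys)) ab = k ab" by (cases xs) auto
      have c': "count_list (zip xs' ys) ab + (if (a,y) = ab then 1 else 0) = k ab" for ab
        using c[rule_format, of ab] by (auto split: if_splits)
      have "a \<in> A" using c'[of "(a,y)"] by (simp add: A_def)
      moreover have "xs' \<in> T (kk a)"
      proof -
        have "count_list (zip xs' ys) ab = kk a ab" for ab
          using c'[of ab] by (cases "ab = (a,y)") (auto simp: kk_def)
        then show ?thesis using xs(2) by (simp add: T_def)
      qed
      ultimately show "xs \<in> (\<Union>a\<in>A. (Cons a) ` T (kk a))" using xs by auto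
    next
      fix xs assume "xs \<in> (\<Union>a\<in>A. (Cons a) ` T (kk a))"
      then obtain a xs' where xs: "xs = a # xs'" "a \<in> A" "xs' \<in> T (kk a)" by auto
      then show "xs \<in> {xs. length xs = length (y#ys) \<and> (\<forall>ab. count_list (zip xs (y#ys)) ab = k ab)}"
        by (auto simp: T_def kk_def A_def)
    qed
    have cardS: "card (\<Union>a\<in>A. (Cons a) ` T (kk a)) = (\<Sum>a\<in>A. card (T (kk a)))"
      by (subst card_UN_disjoint) (auto simp: finT card_image)
    have Pk: "P k = k (a,y) * P (kk a)" if "a \<in> A" for a
    proof -
      have "P k = fact (k (a,y)) * (\<Prod>ab\<in>UNIV-{(a,y)}. fact (k ab))"
        unfolding P_def by (rule prod_remove_UNIV)
      also have "(\<Prod>ab\<in>UNIV-{(a,y)}. fact (k ab)) = (\<Prod>ab\<in>UNIV-{(a,y)}. fact (kk a ab))"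
        by (intro prod.cong) (auto simp: kk_def)
      also have "fact (k (a,y)) = k (a,y) * (fact (kk a (a,y)) :: nat)"
        using that by (simp add: A_def kk_def fact_num_eq_if)
      finally show ?thesis
        unfolding P_def by (subst prod_remove_UNIV[of _ "(a,y)"]) simp
    qed
    have IH: "card (T (kk a)) * P (kk a) = Rr" if "a \<in> A" for a
    proof -
      have "(\<Sum>a'\<in>UNIV. kk a (a',b)) = count_list ys b" for b
      proof (cases "b = y")
        case True
        have "(\<Sum>a'\<in>UNIV. kk a (a',b)) = kk a (a,b) + (\<Sum>a'\<in>UNIV-{a}. kk a (a',b))"
          by (rule sum_remove_UNIV)
        also have "(\<Sum>a'\<in>UNIV-{a}. kk a (a',b)) = (\<Sum>a'\<in>UNIV-{a}. k (a',b))"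
          by (intro sum.cong) (auto simp: kk_def)
        finally have "(\<Sum>a'\<in>UNIV. kk a (a',b)) = k (a,y) - 1 + (\<Sum>a'\<in>UNIV-{a}. k (a',y))"
          using True by (simp add: kk_def)
        moreover have "(\<Sum>a'\<in>UNIV. k (a',y)) = k (a,y) + (\<Sum>a'\<in>UNIV-{a}. k (a',y))"
          by (rule sum_remove_UNIV)
        ultimately show ?thesis using hk[rule_format, of y] that True by (simp add: A_def)
      next
        case False
        then show ?thesis using hk[rule_format, of b] by (simp add: kk_def)
      qed
      then show ?thesis using Cons.IH unfolding T_def P_def Rr_def by blast
    qed
    have "card (\<Union>a\<in>A. (Cons a) ` T (kk a)) * P k = (\<Sum>a\<in>A. card (T (kk a)) * P k)"
      by (simp add: cardS sum_distrib_right)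
    also have "\<dots> = (\<Sum>a\<in>A. k (a,y) * Rr)"
      by (intro sum.cong refl) (simp add: Pk IH[symmetric])
    also have "\<dots> = (\<Sum>a\<in>UNIV. k (a,y)) * Rr"
      by (simp add: sum_distrib_right) (rule sum.mono_neutral_left, auto simp: A_def)
    also have "\<dots> = Suc (count_list ys y) * Rr" using hk[rule_format, of y] by simp
    also have "\<dots> = (\<Prod>b\<in>UNIV. fact (count_list (y#ys) b))"
    proof -
      have "(\<Prod>b\<in>UNIV. fact (count_list (y#ys) b)) = fact (count_list (y#ys) y) * (\<Prod>b\<in>UNIV-{y}. fact (count_list (y#ys) b))"
        by (rule prod_remove_UNIV)
      also have "(\<Prod>b\<in>UNIV-{y}. fact (count_list (y#ys) b)) = (\<Prod>b\<in>UNIV-{y}. fact (count_list ys b))"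
        by (intro prod.cong) auto
      finally have eq: "(\<Prod>b\<in>UNIV. fact (count_list (y#ys) b)) = fact (count_list (y#ys) y) * (\<Prod>b\<in>UNIV-{y}. (fact (count_list ys b) :: nat))" .
      have "Rr = fact (count_list ys y) * (\<Prod>b\<in>UNIV-{y}. fact (count_list ys b))" unfolding Rr_def by (rule prod_remove_UNIV)
      moreover have "count_list (y#ys) y = Suc (count_list ys y)" by simp
      ultimately show ?thesis using eq by (simp only: fact_Suc) (simp add: algebra_simps)
    qed
    finally show "card {xs. length xs = length (y#ys) \<and> (\<forall>ab. count_list (zip xs (y#ys)) ab = k ab)} * (\<Prod>ab\<in>UNIV. fact (k ab))
     = (\<Prod>b\<in>UNIV. fact (count_list (y#ys) b))" using Seq by (simp add: P_def)
  qed
qed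

lemma card_type_class:
  fixes c :: "'y::finite \<Rightarrow> nat"
  assumes "(\<Sum>b\<in>UNIV. c b) = n"
  shows "card {ys. length ys = n \<and> (\<forall>b. count_list ys b = c b)} * (\<Prod>b\<in>UNIV. fact (c b)) = (fact n :: nat)"
proof -
  define k where "k = (\<lambda>(b::'y, u::unit). c b)"
  have hk: "\<forall>u. (\<Sum>b\<in>UNIV. k (b,u)) = count_list (replicate n ()) u"
    using assms by (simp add: k_def count_list_eq_length_filter)
  have cz: "count_list (zip xs (replicate n ())) (b,u) = count_list xs b" if "length xs = n" for xs b u
    using count_zip_fst[of xs "replicate n ()" b] that by (simp add: UNIV_unit)
  have S: "{xs. length xs = length (replicate n ()) \<and> (\<forall>ab. count_list (zip xs (replicate n ())) ab = k ab)}
      = {ys. length ys = n \<and> (\<forall>b. count_list ys b = c b)}"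
  proof -
    have cz': "count_list (zip xs (replicate (length xs) ())) (b,u) = count_list xs b" for xs b u
      using count_zip_fst[of xs "replicate (length xs) ()" b] by (simp add: UNIV_unit)
    show ?thesis by (auto simp: cz' k_def)
  qed
  have P: "(\<Prod>ab\<in>UNIV. fact (k ab)) = (\<Prod>b\<in>UNIV. (fact (c b) :: nat))"
  proof -
    have U: "(UNIV :: ('y \<times> unit) set) = (\<lambda>b. (b,())) ` UNIV" by auto
    have "(\<Prod>ab\<in>UNIV. (fact (k ab)::nat)) = (\<Prod>ab\<in>(\<lambda>b. (b,())) ` UNIV. fact (k ab))"
      by (simp only: U[symmetric])
    also have "\<dots> = (\<Prod>b\<in>UNIV. fact (k (b,())))"
      by (subst prod.reindex) (auto simp: inj_on_def)
    finally show ?thesis by (simp add: k_def)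
  qed
  have R: "(\<Prod>u\<in>(UNIV::unit set). fact (count_list (replicate n ()) u)) = (fact n :: nat)"
    by (simp add: count_list_eq_length_filter)
  have "card {xs. length xs = length (replicate n ()) \<and> (\<forall>ab. count_list (zip xs (replicate n ())) ab = k ab)} * (\<Prod>ab\<in>UNIV. fact (k ab))
     = (\<Prod>u\<in>UNIV. fact (count_list (replicate n ()) u) :: nat)"
    using card_cond_class[of "replicate n ()"] hk by blast
  then show ?thesis using S P R by simp
qed

lemma ln_fact_bounds:
  fixes m :: nat
  assumes "m \<ge> 1"
  shows "real m * ln m - m + 1 \<le> ln (fact m) \<and> ln (fact m) \<le> (real m + 1) * ln m - m + 1"
  using assms
proof (induction m rule: nat_induct_at_least)
  case base then show ?case by simp
next
  case (Suc m)
  have mpos: "real m > 0" using Suc.hyps by simp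
  have d1: "ln (real m + 1) - ln m \<le> 1 / m"
  proof -
    have "ln ((real m + 1) / m) \<le> (real m + 1) / m - 1" by (rule ln_le_minus_one) (use mpos in simp)
    then show ?thesis using mpos by (simp add: ln_div field_simps)
  qed
  have d2: "ln (real m + 1) - ln m \<ge> 1 / (m + 1)"
  proof -
    have "ln (real m / (m + 1)) \<le> real m / (m + 1) - 1" by (rule ln_le_minus_one) (use mpos in simp)
    then show ?thesis using mpos by (simp add: ln_div field_simps)
  qed
  have e1: "real m * (ln (real m + 1) - ln m) \<le> 1"
    using mult_left_mono[OF d1, of "real m"] mpos by simp
  have e2: "(real m + 1) * (ln (real m + 1) - ln m) \<ge> 1"
    using mult_left_mono[OF d2, of "real m + 1"] mpos by (simp add: add.commute)
  have lf: "ln (fact (Suc m)) = ln (real m + 1) + ln (fact m)"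
    by (simp add: ln_mult add.commute)
  show ?case using Suc.IH e1 e2 unfolding lf by (simp add: algebra_simps)
qed

definition theta :: "nat \<Rightarrow> real" where
  "theta m = ln (fact m) - real m * ln m + m"

lemma theta_bounds: "0 \<le> theta m \<and> theta m \<le> 1 + ln m"
proof (cases "m = 0")
  case True then show ?thesis by (simp add: theta_def)
next
  case False
  then show ?thesis using ln_fact_bounds[of m] by (simp add: theta_def algebra_simps)
qed

lemma theta_bounds_n: "(m::nat) \<le> n \<Longrightarrow> 1 \<le> n \<Longrightarrow> 0 \<le> theta m \<and> theta m \<le> 1 + ln (real n)"
proof -
  assume a: "m \<le> n" "1 \<le> n"
  have "ln (real m) \<le> ln n"
  proof (cases "m = 0")
    case True then show ?thesis using a by simp
  next
    case False then show ?thesis using a by simp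
  qed
  then show ?thesis using theta_bounds[of m] by simp
qed

lemma types_k:
  assumes "Q \<in> n_types n" "n \<ge> 1"
  shows "\<exists>k. \<forall>z. real (k z) = real n * Q z"
proof -
  from assms(1) have "\<forall>a. \<exists>k::nat. Q a = real k / real n" by (simp add: n_types_def)
  then obtain k where "\<forall>a. Q a = real (k a) / real n" by metis
  then show ?thesis using assms(2) by (intro exI[of _ k]) auto
qed

lemma types_sum_k:
  assumes "Q \<in> n_types n" "\<forall>z. real (k z) = real n * Q z"
  shows "(\<Sum>z\<in>UNIV. k z) = n"
proof -
  have "real (\<Sum>z\<in>UNIV. k z) = real n * (\<Sum>z\<in>UNIV. Q z)"
    using assms(2) by (simp add: sum_distrib_left)
  also have "\<dots> = real n" using assms(1) by (simp add: n_types_def)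
  finally show ?thesis by linarith
qed

lemma sum_pairs: "(\<Sum>z\<in>(UNIV::('a::finite \<times> 'b::finite) set). f z) = (\<Sum>a\<in>UNIV. \<Sum>b\<in>UNIV. f (a,b))"
  by (simp add: sum.cartesian_product)

lemma sum_pairs': "(\<Sum>z\<in>(UNIV::('a::finite \<times> 'b::finite) set). f z) = (\<Sum>b\<in>UNIV. \<Sum>a\<in>UNIV. f (a,b))"
  unfolding sum_pairs by (rule sum.swap)

lemma prod_pairs: "(\<Prod>z\<in>(UNIV::('a::finite \<times> 'b::finite) set). f z) = (\<Prod>a\<in>UNIV. \<Prod>b\<in>UNIV. f (a,b))"
  by (simp add: prod.cartesian_product)

lemma marg_k:
  assumes "\<forall>z. real (k z) = real n * Q z"
  shows "real n * marg_Y Q b = real (\<Sum>a\<in>UNIV. k (a,b))"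
  using assms by (simp add: marg_Y_def sum_distrib_left)

lemma tclass_eq:
  assumes "\<forall>z. real (k z) = real n * Q z"
  shows "tclass n (marg_Y Q) = {ys. length ys = n \<and> (\<forall>b. count_list ys b = (\<Sum>a\<in>UNIV. k (a,b)))}"
  unfolding tclass_def using marg_k[OF assms] by (simp only: of_nat_eq_iff)

lemma tclass_card:
  fixes Q :: "'x::finite \<times> 'y::finite \<Rightarrow> real"
  assumes "Q \<in> n_types n" "\<forall>z. real (k z) = real n * Q z"
  shows "card (tclass n (marg_Y Q)) * (\<Prod>b\<in>UNIV. fact (\<Sum>a\<in>UNIV. k (a,b))) = (fact n :: nat)"
proof -
  have "(\<Sum>b\<in>UNIV. \<Sum>a\<in>UNIV. k (a,b)) = n" using types_sum_k[OF assms] by (simp add: sum_pairs')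
  then show ?thesis unfolding tclass_eq[OF assms(2)] by (rule card_type_class)
qed

lemma tclass_ne:
  fixes Q :: "'x::finite \<times> 'y::finite \<Rightarrow> real"
  assumes "Q \<in> n_types n" "\<forall>z. real (k z) = real n * Q z"
  shows "tclass n (marg_Y Q) \<noteq> {}"
proof -
  have "card (tclass n (marg_Y Q)) \<noteq> 0"
  proof
    assume "card (tclass n (marg_Y Q)) = 0"
    then have "(fact n :: nat) = 0" using tclass_card[OF assms] by simp
    then show False by simp
  qed
  then show ?thesis by auto
qed

lemma p_formula:
  fixes Q :: "'x::finite \<times> 'y::finite \<Rightarrow> real"
  assumes "Q \<in> n_types n" "\<forall>z. real (k z) = real n * Q z"
  shows "\<exists>C::'x list set. cond_type_prob n PX Q = real (card C) * (\<Prod>a\<in>UNIV. PX a ^ (\<Sum>b\<in>UNIV. k (a,b)))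
           \<and> card C * (\<Prod>z\<in>UNIV. fact (k z)) = (\<Prod>b\<in>UNIV. fact (\<Sum>a\<in>UNIV. k (a,b)) :: nat)"
proof -
  define ys where "ys = (SOME ys. ys \<in> tclass n (marg_Y Q))"
  have ys: "ys \<in> tclass n (marg_Y Q)" unfolding ys_def using tclass_ne[OF assms] by (simp add: some_in_eq)
  then have ly: "length ys = n" and cy: "\<And>b. count_list ys b = (\<Sum>a\<in>UNIV. k (a,b))"
    unfolding tclass_eq[OF assms(2)] by auto
  define C where "C = {xs. length xs = length ys \<and> (\<forall>ab. count_list (zip xs ys) ab = k ab)}"
  have Ceq: "cond_tclass n Q ys = C"
  proof -
    have e: "real n * Q z = real (k z)" for z using assms(2)[rule_format, of z] by simp
    show ?thesis unfolding cond_tclass_def C_def ly e by simp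
  qed
  have "card C * (\<Prod>z\<in>UNIV. fact (k z)) = (\<Prod>b\<in>UNIV. fact (count_list ys b) :: nat)"
  proof -
    have hk: "\<forall>b. (\<Sum>a\<in>UNIV. k (a,b)) = count_list ys b" using cy by simp
    show ?thesis unfolding C_def using card_cond_class[of ys] hk by blast
  qed
  then have c1: "card C * (\<Prod>z\<in>UNIV. fact (k z)) = (\<Prod>b\<in>UNIV. fact (\<Sum>a\<in>UNIV. k (a,b)) :: nat)"
    by (simp add: cy)
  have pl: "prod_list (map PX xs) = (\<Prod>a\<in>UNIV. PX a ^ (\<Sum>b\<in>UNIV. k (a,b)))" if "xs \<in> C" for xs
  proof -
    have "count_list xs a = (\<Sum>b\<in>UNIV. k (a,b))" for a
      using that count_zip_fst[of xs ys a] by (simp add: C_def)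
    then show ?thesis by (simp add: prod_list_count)
  qed
  have "cond_type_prob n PX Q = (\<Sum>xs\<in>C. prod_list (map PX xs))"
    unfolding cond_type_prob_def Let_def ys_def[symmetric] Ceq ..
  also have "\<dots> = real (card C) * (\<Prod>a\<in>UNIV. PX a ^ (\<Sum>b\<in>UNIV. k (a,b)))"
    using pl by simp
  finally show ?thesis using c1 by blast
qed

definition good :: "('x \<Rightarrow> real) \<Rightarrow> ('x \<Rightarrow> 'y \<Rightarrow> real) \<Rightarrow> ('x \<times> 'y \<Rightarrow> real) \<Rightarrow> bool" where
  "good PX W Q \<longleftrightarrow> (\<forall>z. Q z > 0 \<longrightarrow> joint PX W z > 0)"

definition D1 :: "('x \<Rightarrow> real) \<Rightarrow> ('x \<Rightarrow> 'y \<Rightarrow> real) \<Rightarrow> ('x \<times> 'y \<Rightarrow> real) \<Rightarrow> real" where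
  "D1 PX W Q = (\<Sum>z\<in>{z. Q z > 0}. Q z * ln (Q z / joint PX W z))"

definition D2 :: "('x::finite \<Rightarrow> real) \<Rightarrow> ('x \<times> 'y \<Rightarrow> real) \<Rightarrow> real" where
  "D2 PX Q = (\<Sum>z\<in>{z. Q z > 0}. Q z * ln (Q z / prod_dist PX (marg_Y Q) z))"

definition fval :: "('x::finite \<Rightarrow> real) \<Rightarrow> ('x \<Rightarrow> 'y \<Rightarrow> real) \<Rightarrow> real \<Rightarrow> ('x \<times> 'y \<Rightarrow> real) \<Rightarrow> real" where
  "fval PX W R Q = D1 PX W Q + 1/2 * max 0 (R - D2 PX Q)"

definition Vn :: "('x::finite \<Rightarrow> real) \<Rightarrow> ('x \<Rightarrow> 'y::finite \<Rightarrow> real) \<Rightarrow> real \<Rightarrow> nat \<Rightarrow> ('x \<times> 'y \<Rightarrow> real) \<Rightarrow> real" where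
  "Vn PX W R n Q = 1/2 * real (card (tclass n (marg_Y Q)))
                   * exp_neg (real n) (exp_info W Q)
                   * frakY (exp (real n * R)) n PX Q"

lemma ln_min:
  fixes a b :: real
  assumes "a > 0" "b > 0" shows "ln (min a b) = min (ln a) (ln b)"
proof (cases "a \<le> b")
  case True
  then have "ln a \<le> ln b" using assms by simp
  then show ?thesis using True by (simp add: min_def)
next
  case False
  then have "\<not> ln a \<le> ln b" using assms by simp
  then show ?thesis using False by (simp add: min_def)
qed

lemma sum_ext_UNIV:
  fixes g :: "'a::finite \<Rightarrow> real"
  assumes "\<And>z. z \<notin> S \<Longrightarrow> g z = 0"
  shows "(\<Sum>z\<in>S. g z) = (\<Sum>z\<in>UNIV. g z)"
  by (rule sum.mono_neutral_left) (auto simp: assms)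

lemma good_bound:
  fixes PX :: "'x::finite \<Rightarrow> real" and W :: "'x \<Rightarrow> 'y::finite \<Rightarrow> real"
  assumes PX: "is_dist PX" and W: "\<And>a. is_dist (W a)" and n1: "n \<ge> 1"
    and Qn: "Q \<in> n_types n" and gd: "good PX W Q"
  shows "Vn PX W R n Q > 0 \<and>
    \<bar>ln (Vn PX W R n Q) + real n * fval PX W R Q\<bar>
       \<le> (2 + 2 * real (card (UNIV::'y set)) + real (card (UNIV::('x \<times> 'y) set))) * (1 + ln n)"
proof -
  obtain k where k: "\<forall>z. real (k z) = real n * Q z" using types_k[OF Qn n1] by blast
  define c where "c = (\<lambda>b. \<Sum>a\<in>UNIV. k (a,b))"
  define d where "d = (\<lambda>a. \<Sum>b\<in>UNIV. k (a,b))"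
  define S where "S = {z. Q z > 0}"
  define L where "L = 1 + ln (real n)"
  have npos: "real n > 0" using n1 by simp
  have Qnn: "Q z \<ge> 0" for z using Qn unfolding n_types_def by blast
  have kQ: "Q z = real (k z) / real n" for z using k[rule_format, of z] npos by (simp add: field_simps)
  have kpos: "k z > 0 \<longleftrightarrow> z \<in> S" for z
  proof -
    have "real (k z) > 0 \<longleftrightarrow> Q z > 0" using k[rule_format, of z] npos by (simp add: zero_less_mult_iff)
    then show ?thesis by (simp add: S_def)
  qed
  have PXnn: "PX a \<ge> 0" for a using PX by (simp add: is_dist_def)
  have Wnn: "W a b \<ge> 0" for a b using W[of a] by (simp add: is_dist_def)
  have posPW: "PX (fst z) > 0 \<and> W (fst z) (snd z) > 0" if "z \<in> S" for z
  proof -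
    have "PX (fst z) * W (fst z) (snd z) > 0" using gd that by (cases z) (auto simp: good_def S_def joint_def)
    then show ?thesis using PXnn[of "fst z"] Wnn[of "fst z" "snd z"] by (auto simp: zero_less_mult_iff)
  qed
  have sumk: "(\<Sum>z\<in>UNIV. k z) = n" by (rule types_sum_k[OF Qn k])
  have sumc: "(\<Sum>b\<in>UNIV. c b) = n" using sumk by (simp add: c_def sum_pairs')
  have kle: "k z \<le> n" for z using member_le_sum[of z UNIV k] sumk by simp
  have cle: "c b \<le> n" for b using member_le_sum[of b UNIV c] sumc by simp
  have cpos: "c b > 0" if "k (a,b) > 0" for a b
    using member_le_sum[of a UNIV "\<lambda>a. k (a,b)"] that by (simp add: c_def)
  have dpos: "PX a > 0" if "d a > 0" for a
  proof -
    have "\<exists>b. k (a,b) > 0"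
    proof (rule ccontr)
      assume "\<not> ?thesis"
      then have "\<forall>b. k (a,b) = 0" by simp
      then have "d a = 0" by (simp add: d_def)
      with that show False by simp
    qed
    then obtain b where "k (a,b) > 0" by blast
    then show ?thesis using posPW[of "(a,b)"] kpos by auto
  qed
  have qY: "marg_Y Q b = real (c b) / real n" for b
    using marg_k[OF k, of b] npos by (simp add: c_def field_simps)

  define A where "A = card (tclass n (marg_Y Q))"
  have Ac: "A * (\<Prod>b\<in>UNIV. fact (c b)) = (fact n :: nat)"
    unfolding A_def c_def by (rule tclass_card[OF Qn k])
  have Apos: "A > 0" using Ac by (metis gr0I mult_is_0 fact_nonzero)
  have lnA: "ln (real A) = ln (fact n) - (\<Sum>b\<in>UNIV. ln (fact (c b)))"
  proof -
    have "real A * (\<Prod>b\<in>UNIV. real (fact (c b))) = real (fact n)"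
      using arg_cong[OF Ac, of real] by (simp add: of_nat_prod)
    then have "ln (real A * (\<Prod>b\<in>UNIV. real (fact (c b)))) = ln (fact n)" by simp
    then have "ln (real A) + (\<Sum>b\<in>UNIV. ln (fact (c b))) = ln (fact n)"
      using Apos by (simp add: ln_mult ln_prod prod_pos)
    then show ?thesis by simp
  qed
  define E where "E = (\<Sum>z\<in>S. Q z * ln (1 / W (fst z) (snd z)))"
  have EI: "exp_info W Q = ereal E"
  proof -
    have "exp_info W Q = (\<Sum>z\<in>S. ereal (Q z * ln (1 / W (fst z) (snd z))))"
      unfolding exp_info_def S_def[symmetric]
    proof (intro sum.cong refl)
      fix z assume "z \<in> S"
      then have "W (fst z) (snd z) \<noteq> 0" using posPW[of z] by auto
      then show "ereal (Q z) * info_dens W (fst z) (snd z) = ereal (Q z * ln (1 / W (fst z) (snd z)))"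
        by (simp add: info_dens_def)
    qed
    then show ?thesis by (simp add: E_def)
  qed
  define SW where "SW = (\<Sum>z\<in>UNIV. real (k z) * ln (W (fst z) (snd z)))"
  have nE: "- real n * E = SW"
  proof -
    have "- real n * E = (\<Sum>z\<in>S. real (k z) * ln (W (fst z) (snd z)))"
      unfolding E_def sum_distrib_left
      by (intro sum.cong refl) (use posPW k in \<open>auto simp: ln_div\<close>)
    also have "\<dots> = SW" unfolding SW_def by (rule sum_ext_UNIV) (use kpos in auto)
    finally show ?thesis .
  qed
  define ee where "ee = exp_neg (real n) (exp_info W Q)"
  have ee: "ee = exp (- real n * E)" by (simp add: ee_def EI exp_neg_def)
  have lnee: "ln ee = SW" using nE ee by simp
  have eepos: "ee > 0" using ee by simp

  define p where "p = cond_type_prob n PX Q"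
  obtain C :: "'x list set" where pC: "p = real (card C) * (\<Prod>a\<in>UNIV. PX a ^ d a)"
    and Cc: "card C * (\<Prod>z\<in>UNIV. fact (k z)) = (\<Prod>b\<in>UNIV. fact (c b) :: nat)"
    using p_formula[OF Qn k, of PX] unfolding p_def c_def d_def by blast
  have "(\<Prod>b\<in>UNIV. fact (c b) :: nat) \<noteq> 0" by simp
  then have Cpos: "card C > 0" using Cc by (cases "card C = 0") auto
  have lnC: "ln (real (card C)) = (\<Sum>b\<in>UNIV. ln (fact (c b))) - (\<Sum>z\<in>UNIV. ln (fact (k z)))"
  proof -
    have "real (card C) * (\<Prod>z\<in>UNIV. real (fact (k z))) = (\<Prod>b\<in>UNIV. real (fact (c b)))"
      using arg_cong[OF Cc, of real] by (simp add: of_nat_prod)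
    then have "ln (real (card C) * (\<Prod>z\<in>UNIV. real (fact (k z)))) = ln (\<Prod>b\<in>UNIV. real (fact (c b)))" by simp
    then have "ln (real (card C)) + (\<Sum>z\<in>UNIV. ln (fact (k z))) = (\<Sum>b\<in>UNIV. ln (fact (c b)))"
      using Cpos by (simp add: ln_mult ln_prod prod_pos)
    then show ?thesis by simp
  qed
  have Pipos: "PX a ^ d a > 0" for a
    using dpos[of a] by (cases "d a = 0") auto
  define SP where "SP = (\<Sum>z\<in>UNIV. real (k z) * ln (PX (fst z)))"
  have lnPi: "ln (\<Prod>a\<in>UNIV. PX a ^ d a) = SP"
  proof -
    have "ln (\<Prod>a\<in>UNIV. PX a ^ d a) = (\<Sum>a\<in>UNIV. ln (PX a ^ d a))"
    proof (rule ln_prod)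
      fix i :: 'x show "PX i ^ d i \<noteq> 0" using Pipos[of i] by linarith
    qed simp
    also have "\<dots> = (\<Sum>a\<in>UNIV. real (d a) * ln (PX a))"
      by (intro sum.cong refl) (use dpos in \<open>auto simp: ln_realpow\<close>)
    also have "\<dots> = SP"
      unfolding SP_def sum_pairs d_def by (simp add: sum_distrib_right)
    finally show ?thesis .
  qed
  have ppos: "p > 0" using pC Cpos Pipos by (simp add: prod_pos)
  have lnp: "ln p = (\<Sum>b\<in>UNIV. ln (fact (c b))) - (\<Sum>z\<in>UNIV. ln (fact (k z))) + SP"
  proof -
    have Pi': "(\<Prod>a\<in>UNIV. PX a ^ d a) > 0" using Pipos by (intro prod_pos) blast
    have "ln p = ln (real (card C)) + ln (\<Prod>a\<in>UNIV. PX a ^ d a)"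
      unfolding pC using Cpos Pi' by (intro ln_mult_pos) auto
    then show ?thesis using lnC lnPi by simp
  qed
  define F where "F = frakY (exp (real n * R)) n PX Q"
  have Fe: "F = min (2 * p) (exp (- (real n * R) / 2) * sqrt p)"
    unfolding F_def frakY_def p_def[symmetric] by (simp add: powr_def)
  have Fpos: "F > 0" using Fe ppos by simp
  have lnF: "ln F = min (ln 2 + ln p) (- (real n * R) / 2 + ln p / 2)"
    unfolding Fe using ppos by (simp add: ln_min ln_mult ln_sqrt)
  have Veq: "Vn PX W R n Q = 1/2 * real A * ee * F" by (simp add: Vn_def A_def ee_def F_def)
  have Vpos: "Vn PX W R n Q > 0" unfolding Veq using Apos eepos Fpos by (intro mult_pos_pos) auto
  have lnV: "ln (Vn PX W R n Q) = - ln 2 + ln (real A) + ln ee + ln F"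
    unfolding Veq using Apos eepos Fpos by (simp add: ln_mult_pos ln_div)

  define SK where "SK = (\<Sum>z\<in>UNIV. real (k z) * ln (real (k z)))"
  define SC where "SC = (\<Sum>z\<in>UNIV. real (k z) * ln (real (c (snd z))))"
  have nD1: "real n * D1 PX W Q = SK - real n * ln n - SP - SW"
  proof -
    have "real n * D1 PX W Q = (\<Sum>z\<in>S. real (k z) * (ln (real (k z)) - ln n - ln (PX (fst z)) - ln (W (fst z) (snd z))))"
      unfolding D1_def S_def[symmetric] sum_distrib_left
    proof (intro sum.cong refl)
      fix z assume z: "z \<in> S"
      have kz: "real (k z) > 0" using kpos z by simp
      have "Q z / joint PX W z = real (k z) / (real n * (PX (fst z) * W (fst z) (snd z)))"
        using kQ[of z] by (cases z) (simp add: joint_def)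
      then have "ln (Q z / joint PX W z) = ln (real (k z)) - ln n - ln (PX (fst z)) - ln (W (fst z) (snd z))"
        using posPW[OF z] kz npos by (simp add: ln_div ln_mult)
      then show "real n * (Q z * ln (Q z / joint PX W z)) = real (k z) * (ln (real (k z)) - ln n - ln (PX (fst z)) - ln (W (fst z) (snd z)))"
        using k[rule_format, of z] by simp
    qed
    also have "\<dots> = (\<Sum>z\<in>UNIV. real (k z) * (ln (real (k z)) - ln n - ln (PX (fst z)) - ln (W (fst z) (snd z))))"
      by (rule sum_ext_UNIV) (use kpos in auto)
    also have "\<dots> = SK - (\<Sum>z\<in>UNIV. real (k z)) * ln n - SP - SW"
      unfolding SK_def SP_def SW_def by (simp add: algebra_simps sum_subtractf sum.distrib sum_distrib_left)
    finally show ?thesis using sumk by (simp flip: of_nat_sum)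
  qed
  have nD2: "real n * D2 PX Q = SK - SP - SC"
  proof -
    have "real n * D2 PX Q = (\<Sum>z\<in>S. real (k z) * (ln (real (k z)) - ln (PX (fst z)) - ln (real (c (snd z)))))"
      unfolding D2_def S_def[symmetric] sum_distrib_left
    proof (intro sum.cong refl)
      fix z assume z: "z \<in> S"
      have kz: "real (k z) > 0" using kpos z by simp
      have cz: "real (c (snd z)) > 0" using cpos[of "fst z" "snd z"] kpos z by simp
      have "Q z / prod_dist PX (marg_Y Q) z = real (k z) / (PX (fst z) * real (c (snd z)))"
      proof -
        have e1: "real (k z) = real n * Q z" using k[rule_format, of z] .
        have e2: "real (c (snd z)) = real n * marg_Y Q (snd z)" using marg_k[OF k, of "snd z"] by (simp add: c_def)
        have "real (k z) / (PX (fst z) * real (c (snd z))) = (real n * Q z) / (real n * (PX (fst z) * marg_Y Q (snd z)))"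
          unfolding e1 e2 by (simp add: ac_simps)
        also have "\<dots> = Q z / (PX (fst z) * marg_Y Q (snd z))"
          using npos by (intro mult_divide_mult_cancel_left) simp
        finally show ?thesis by (cases z) (simp add: prod_dist_def)
      qed
      then have "ln (Q z / prod_dist PX (marg_Y Q) z) = ln (real (k z)) - ln (PX (fst z)) - ln (real (c (snd z)))"
        using posPW[OF z] kz cz by (simp add: ln_div ln_mult)
      then show "real n * (Q z * ln (Q z / prod_dist PX (marg_Y Q) z)) = real (k z) * (ln (real (k z)) - ln (PX (fst z)) - ln (real (c (snd z))))"
        using k[rule_format, of z] by simp
    qed
    also have "\<dots> = (\<Sum>z\<in>UNIV. real (k z) * (ln (real (k z)) - ln (PX (fst z)) - ln (real (c (snd z)))))"
      by (rule sum_ext_UNIV) (use kpos in auto)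
    also have "\<dots> = SK - SP - SC"
      unfolding SK_def SP_def SC_def by (simp add: algebra_simps sum_subtractf sum.distrib)
    finally show ?thesis .
  qed
  have SC: "SC = (\<Sum>b\<in>UNIV. real (c b) * ln (real (c b)))"
    unfolding SC_def sum_pairs' c_def by (simp add: sum_distrib_right)
  have thc: "(\<Sum>b\<in>UNIV. theta (c b)) = (\<Sum>b\<in>UNIV. ln (fact (c b))) - (\<Sum>b\<in>UNIV. real (c b) * ln (real (c b))) + real n"
    unfolding theta_def using sumc by (simp add: sum.distrib sum_subtractf flip: of_nat_sum)
  have thk: "(\<Sum>z\<in>UNIV. theta (k z)) = (\<Sum>z\<in>UNIV. ln (fact (k z))) - SK + real n"
    unfolding theta_def SK_def using sumk by (simp add: sum.distrib sum_subtractf flip: of_nat_sum)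
  have thn: "theta n = ln (fact n) - real n * ln n + real n" by (simp add: theta_def)
  have bc: "0 \<le> (\<Sum>b\<in>UNIV. theta (c b)) \<and> (\<Sum>b\<in>UNIV. theta (c b)) \<le> real (card (UNIV::'y set)) * L"
  proof
    show "0 \<le> (\<Sum>b\<in>UNIV. theta (c b))" by (rule sum_nonneg) (use theta_bounds in auto)
    show "(\<Sum>b\<in>UNIV. theta (c b)) \<le> real (card (UNIV::'y set)) * L"
      using sum_bounded_above[of UNIV "\<lambda>b. theta (c b)" L] theta_bounds_n[OF cle n1] by (simp add: L_def)
  qed
  have bk: "0 \<le> (\<Sum>z\<in>UNIV. theta (k z)) \<and> (\<Sum>z\<in>UNIV. theta (k z)) \<le> real (card (UNIV::('x \<times> 'y) set)) * L"
  proof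
    show "0 \<le> (\<Sum>z\<in>UNIV. theta (k z))" by (rule sum_nonneg) (use theta_bounds in auto)
    show "(\<Sum>z\<in>UNIV. theta (k z)) \<le> real (card (UNIV::('x \<times> 'y) set)) * L"
      using sum_bounded_above[of UNIV "\<lambda>z. theta (k z)" L] theta_bounds_n[OF kle n1] by (simp add: L_def)
  qed
  have bn: "0 \<le> theta n \<and> theta n \<le> L" using theta_bounds_n[of n n] n1 by (simp add: L_def)
  have L1: "L \<ge> 1" using n1 by (simp add: L_def)
  have nf: "real n * fval PX W R Q = real n * D1 PX W Q + max 0 (real n * R / 2 - real n * D2 PX Q / 2)"
  proof (cases "R \<ge> D2 PX Q")
    case True
    then have "real n * R / 2 - real n * D2 PX Q / 2 \<ge> 0" using npos
      by (simp add: mult_left_mono flip: right_diff_distrib)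
    then show ?thesis using True by (simp add: fval_def field_simps)
  next
    case False
    then have "real n * R / 2 - real n * D2 PX Q / 2 \<le> 0" using npos
      by (simp add: mult_left_mono flip: right_diff_distrib)
    then show ?thesis using False by (simp add: fval_def field_simps)
  qed
  have l2: "0 < ln (2::real)" "ln (2::real) < 1" by (simp_all add: ln_2_less_1)
  define m1 where "m1 = min (ln 2 + ln p) (- (real n * R) / 2 + ln p / 2)"
  define M1 where "M1 = max 0 (real n * R / 2 - real n * D2 PX Q / 2)"
  have m1: "m1 \<le> ln 2 + ln p" "m1 \<le> - (real n * R) / 2 + ln p / 2"
     "m1 = ln 2 + ln p \<or> m1 = - (real n * R) / 2 + ln p / 2" unfolding m1_def by auto
  have M1: "M1 \<ge> 0" "M1 \<ge> real n * R / 2 - real n * D2 PX Q / 2"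
     "M1 = 0 \<or> M1 = real n * R / 2 - real n * D2 PX Q / 2" unfolding M1_def by auto
  have main: "\<bar>ln (Vn PX W R n Q) + real n * fval PX W R Q\<bar>
      \<le> 2 * L + 2 * (real (card (UNIV::'y set)) * L) + real (card (UNIV::('x \<times> 'y) set)) * L"
    unfolding lnV nf lnF[folded m1_def] M1_def[symmetric] lnA lnee
    using m1 M1 l2 bc bk bn L1 thc thk thn lnp nD1 nD2 SC by linarith
  show ?thesis using Vpos main by (simp add: L_def algebra_simps)
qed

lemma bad_zero:
  fixes PX :: "'x::finite \<Rightarrow> real" and W :: "'x \<Rightarrow> 'y::finite \<Rightarrow> real"
  assumes PX: "is_dist PX" and W: "\<And>a. is_dist (W a)" and n1: "n \<ge> 1"
    and Qn: "Q \<in> n_types n" and bad: "\<not> good PX W Q"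
  shows "Vn PX W R n Q = 0"
proof -
  obtain a b where z: "Q (a,b) > 0" "\<not> joint PX W (a,b) > 0"
    using bad by (auto simp: good_def)
  have PXnn: "PX a \<ge> 0" using PX by (simp add: is_dist_def)
  have Wnn: "W a b \<ge> 0" using W[of a] by (simp add: is_dist_def)
  have j: "joint PX W (a,b) = PX a * W a b" by (simp add: joint_def)
  have "PX a * W a b = 0" using z(2) j mult_nonneg_nonneg[OF PXnn Wnn] by linarith
  then consider "W a b = 0" | "PX a = 0" by auto
  then show ?thesis
  proof cases
    case 1
    have "exp_info W Q = \<infinity>"
      unfolding exp_info_def sum_Pinfty
      using z(1) 1 by (intro conjI) (auto intro!: bexI[of _ "(a,b)"] simp: info_dens_def)
    then show ?thesis by (simp add: Vn_def exp_neg_def)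
  next
    case 2
    obtain k where k: "\<forall>z. real (k z) = real n * Q z" using types_k[OF Qn n1] by blast
    obtain C :: "'x list set" where pC: "cond_type_prob n PX Q = real (card C) * (\<Prod>a\<in>UNIV. PX a ^ (\<Sum>b\<in>UNIV. k (a,b)))"
      using p_formula[OF Qn k, of PX] by blast
    have "k (a,b) > 0" using k[rule_format, of "(a,b)"] z(1) n1
      by (metis of_nat_0_less_iff of_nat_less_0_iff mult_pos_pos zero_less_iff_neq_zero of_nat_0_le_iff gr0I le_numeral_extra(2) linorder_not_le of_nat_0)
    then have "(\<Sum>b\<in>UNIV. k (a,b)) > 0" using member_le_sum[of b UNIV "\<lambda>b. k (a,b)"] by simp
    then have "PX a ^ (\<Sum>b\<in>UNIV. k (a,b)) = 0" using 2 by simp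
    then have "(\<Prod>a\<in>UNIV. PX a ^ (\<Sum>b\<in>UNIV. k (a,b))) = 0"
      by (intro prod_zero) auto
    then have "cond_type_prob n PX Q = 0" using pC by simp
    then show ?thesis by (simp add: Vn_def frakY_def)
  qed
qed

lemma F_bad:
  fixes PX :: "'x::finite \<Rightarrow> real" and W :: "'x \<Rightarrow> 'y::finite \<Rightarrow> real"
  assumes PX: "is_dist PX" and W: "\<And>a. is_dist (W a)" and bad: "\<not> good PX W Q"
  shows "rel_ent Q (joint PX W) + ereal (1/2) * max 0 (ereal R - rel_ent Q (prod_dist PX (marg_Y Q))) = \<infinity>"
proof -
  obtain a b where z: "Q (a,b) > 0" "\<not> joint PX W (a,b) > 0"
    using bad by (auto simp: good_def)
  have PXnn: "PX a \<ge> 0" using PX by (simp add: is_dist_def)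
  have Wnn: "W a b \<ge> 0" using W[of a] by (simp add: is_dist_def)
  have j: "joint PX W (a,b) = PX a * W a b" by (simp add: joint_def)
  have "joint PX W (a,b) = 0" using z(2) j mult_nonneg_nonneg[OF PXnn Wnn] by linarith
  then have "rel_ent Q (joint PX W) = \<infinity>"
    unfolding rel_ent_def sum_Pinfty using z(1) by (intro conjI) (auto intro!: bexI[of _ "(a,b)"])
  moreover have "ereal (1/2) * max 0 (ereal R - rel_ent Q (prod_dist PX (marg_Y Q))) \<ge> 0"
    by (intro ereal_0_le_mult) auto
  ultimately show ?thesis by simp
qed

lemma F_good:
  fixes PX :: "'x::finite \<Rightarrow> real" and W :: "'x \<Rightarrow> 'y::finite \<Rightarrow> real"
  assumes PX: "is_dist PX" and W: "\<And>a. is_dist (W a)" and gd: "good PX W Q"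
    and Qnn: "\<And>z. Q z \<ge> 0"
  shows "rel_ent Q (joint PX W) + ereal (1/2) * max 0 (ereal R - rel_ent Q (prod_dist PX (marg_Y Q))) = ereal (fval PX W R Q)"
proof -
  have PXnn: "PX a \<ge> 0" for a using PX by (simp add: is_dist_def)
  have Wnn: "W a b \<ge> 0" for a b using W[of a] by (simp add: is_dist_def)
  have posPW: "PX a > 0 \<and> W a b > 0" if "Q (a,b) > 0" for a b
  proof -
    have "PX a * W a b > 0" using gd that by (auto simp: good_def joint_def)
    then show ?thesis using PXnn[of a] Wnn[of a b] by (auto simp: zero_less_mult_iff)
  qed
  have qpos: "marg_Y Q b > 0" if "Q (a,b) > 0" for a b
    using member_le_sum[of a UNIV "\<lambda>a. Q (a,b)"] that Qnn by (simp add: marg_Y_def)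
  have r1: "rel_ent Q (joint PX W) = ereal (D1 PX W Q)"
    unfolding rel_ent_def D1_def
  proof (subst sum_ereal[symmetric], intro sum.cong refl)
    fix z assume "z \<in> {z. Q z > 0}"
    then obtain a b where z: "z = (a,b)" "Q (a,b) > 0" by (cases z) auto
    then have "PX a > 0" "W a b > 0" using posPW by auto
    then show "(if joint PX W z = 0 then \<infinity> else ereal (Q z * ln (Q z / joint PX W z))) = ereal (Q z * ln (Q z / joint PX W z))"
      using z by (simp add: joint_def)
  qed
  have r2: "rel_ent Q (prod_dist PX (marg_Y Q)) = ereal (D2 PX Q)"
    unfolding rel_ent_def D2_def
  proof (subst sum_ereal[symmetric], intro sum.cong refl)
    fix z assume "z \<in> {z. Q z > 0}"
    then obtain a b where z: "z = (a,b)" "Q (a,b) > 0" by (cases z) auto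
    then have "PX a > 0" "marg_Y Q b > 0" using posPW qpos by auto
    then show "(if prod_dist PX (marg_Y Q) z = 0 then \<infinity> else ereal (Q z * ln (Q z / prod_dist PX (marg_Y Q) z))) = ereal (Q z * ln (Q z / prod_dist PX (marg_Y Q) z))"
      using z by (simp add: prod_dist_def)
  qed
  show ?thesis unfolding r1 r2 fval_def
    by (cases "R - D2 PX Q \<ge> 0") (auto simp: max_def)
qed

lemma approx_seq:
  fixes PX :: "'x::finite \<Rightarrow> real" and W :: "'x \<Rightarrow> 'y::finite \<Rightarrow> real"
  assumes PX: "is_dist PX" and W: "\<And>a. is_dist (W a)"
    and Q0m: "Q0 \<in> n_types m" and m1: "m \<ge> 1" and gd: "good PX W Q0"
  shows "\<exists>Qs. (\<forall>n\<ge>m. Qs n \<in> n_types n \<and> good PX W (Qs n)) \<and>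
              ((\<lambda>n. fval PX W R (Qs n)) \<longlonglongrightarrow> fval PX W R Q0)"
proof -
  obtain k0 where k0: "\<forall>z. real (k0 z) = real m * Q0 z" using types_k[OF Q0m m1] by blast
  have mpos: "real m > 0" using m1 by simp
  have Q0nn: "Q0 z \<ge> 0" for z using Q0m unfolding n_types_def by blast
  have sumQ0: "(\<Sum>z\<in>UNIV. Q0 z) = 1" using Q0m by (simp add: n_types_def)
  obtain z0 where z0: "Q0 z0 > 0"
  proof -
    have "\<exists>z. Q0 z > 0"
    proof (rule ccontr)
      assume "\<not> ?thesis"
      then have "\<forall>z. Q0 z = 0" using Q0nn by (metis antisym not_less)
      then have "Q0 = (\<lambda>z. 0)" by (intro ext) blast
      then show False using sumQ0 by simp
    qed
    then show ?thesis using that by blast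
  qed
  have k0pos: "k0 z > 0 \<longleftrightarrow> Q0 z > 0" for z
  proof -
    have "real (k0 z) > 0 \<longleftrightarrow> Q0 z > 0" using k0[rule_format, of z] mpos by (simp add: zero_less_mult_iff)
    then show ?thesis by simp
  qed
  define kn where "kn = (\<lambda>n z. (n div m) * k0 z + (if z = z0 then n mod m else 0))"
  define Qs where "Qs = (\<lambda>n z. real (kn n z) / real n)"
  have sumk0: "(\<Sum>z\<in>UNIV. k0 z) = m" by (rule types_sum_k[OF Q0m k0])
  have Qs_types: "Qs n \<in> n_types n" if "n \<ge> m" for n
  proof -
    have npos: "real n > 0" using that m1 by simp
    have "(\<Sum>z\<in>UNIV. kn n z) = (n div m) * m + n mod m"
      by (simp add: kn_def sum.distrib sumk0 flip: sum_distrib_left)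
    also have "\<dots> = n" by simp
    finally have "(\<Sum>z\<in>UNIV. real (kn n z)) = real n" by (simp flip: of_nat_sum)
    then have "(\<Sum>z\<in>UNIV. Qs n z) = 1" using npos by (simp add: Qs_def flip: sum_divide_distrib)
    then show ?thesis by (auto simp: n_types_def Qs_def)
  qed
  have Qs_pos: "Qs n z > 0 \<longleftrightarrow> Q0 z > 0" if "n \<ge> m" for n z
  proof -
    have npos: "real n > 0" using that m1 by simp
    have q1: "n div m \<ge> 1" using div_le_mono[OF that, of m] m1 by simp
    have "kn n z > 0 \<longleftrightarrow> Q0 z > 0"
    proof
      assume "kn n z > 0"
      then have "k0 z > 0 \<or> z = z0" by (auto simp: kn_def split: if_splits)
      then show "Q0 z > 0" using k0pos z0 by auto
    next
      assume "Q0 z > 0"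
      then have "k0 z > 0" using k0pos by simp
      then show "kn n z > 0" using q1 by (simp add: kn_def)
    qed
    then show ?thesis using npos by (simp add: Qs_def zero_less_divide_iff)
  qed
  have Qs_good: "good PX W (Qs n)" if "n \<ge> m" for n
    using gd Qs_pos[OF that] unfolding good_def by blast
  have Qs_form: "Qs n z = Q0 z + real (n mod m) / real n * ((if z = z0 then 1 else 0) - Q0 z)" if "n \<ge> m" for n z
  proof -
    have npos: "real n > 0" using that m1 by simp
    have dm: "real (n div m) * real m = real n - real (n mod m)"
      by (metis div_mult_mod_eq of_nat_add of_nat_mult add_diff_cancel_right')
    have "real (kn n z) = real (n div m) * real m * Q0 z + (if z = z0 then real (n mod m) else 0)"
      using k0[rule_format, of z] by (simp add: kn_def)
    also have "\<dots> = (real n - real (n mod m)) * Q0 z + (if z = z0 then real (n mod m) else 0)"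
      by (simp add: dm)
    finally show ?thesis using npos by (simp add: Qs_def field_simps)
  qed
  have rn: "(\<lambda>n. real (n mod m) / real n) \<longlonglongrightarrow> 0"
  proof (rule tendsto_sandwich[of "\<lambda>_. 0" _ _ "\<lambda>n. real m / real n"])
    show "\<forall>\<^sub>F n in sequentially. 0 \<le> real (n mod m) / real n" by simp
    show "\<forall>\<^sub>F n in sequentially. real (n mod m) / real n \<le> real m / real n"
      using m1 by (intro always_eventually allI divide_right_mono) (simp_all add: less_imp_le)
  qed (auto intro: lim_const_over_n)
  have Qs_lim: "(\<lambda>n. Qs n z) \<longlonglongrightarrow> Q0 z" for z
  proof -
    have "(\<lambda>n. Q0 z + real (n mod m) / real n * ((if z = z0 then 1 else 0) - Q0 z)) \<longlonglongrightarrow> Q0 z + 0 * ((if z = z0 then 1 else 0) - Q0 z)"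
      by (intro tendsto_intros rn)
    then have "(\<lambda>n. Q0 z + real (n mod m) / real n * ((if z = z0 then 1 else 0) - Q0 z)) \<longlonglongrightarrow> Q0 z" by simp
    moreover have "\<forall>\<^sub>F n in sequentially. Q0 z + real (n mod m) / real n * ((if z = z0 then 1 else 0) - Q0 z) = Qs n z"
      unfolding eventually_sequentially by (intro exI[of _ m] allI impI, rule Qs_form[symmetric])
    ultimately show ?thesis by (rule Lim_transform_eventually)
  qed
  define S0 where "S0 = {z. Q0 z > 0}"
  define g where "g = (\<lambda>Q::'x \<times> 'y \<Rightarrow> real. (\<Sum>z\<in>S0. Q z * ln (Q z / joint PX W z)) + 1/2 * max 0 (R - (\<Sum>z\<in>S0. Q z * ln (Q z / (PX (fst z) * (\<Sum>a\<in>UNIV. Q (a, snd z)))))))"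
  have pd: "prod_dist PX (marg_Y Q) z = PX (fst z) * (\<Sum>a\<in>UNIV. Q (a, snd z))" for Q :: "'x \<times> 'y \<Rightarrow> real" and z
    by (cases z) (simp add: prod_dist_def marg_Y_def)
  have fg: "fval PX W R Q = g Q" if "{z. Q z > 0} = S0" for Q
    unfolding fval_def D1_def D2_def g_def that pd ..
  have PXnn: "PX a \<ge> 0" for a using PX by (simp add: is_dist_def)
  have Wnn: "W a b \<ge> 0" for a b using W[of a] by (simp add: is_dist_def)
  have Jpos: "joint PX W z > 0" if "z \<in> S0" for z using gd that unfolding good_def S0_def by blast
  have PXpos: "PX (fst z) > 0" if "z \<in> S0" for z
  proof -
    obtain a b where z: "z = (a,b)" by (cases z)
    have "PX a * W a b > 0" using Jpos[OF that] z by (simp add: joint_def)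
    then show ?thesis using z PXnn[of a] Wnn[of a b] by (simp add: zero_less_mult_iff)
  qed
  have margpos: "(\<Sum>a\<in>UNIV. Q0 (a, snd z)) > 0" if "z \<in> S0" for z
    using member_le_sum[of "fst z" UNIV "\<lambda>a. Q0 (a, snd z)"] that Q0nn by (cases z) (auto simp: S0_def)
  have T1: "(\<lambda>n. Qs n z * ln (Qs n z / joint PX W z)) \<longlonglongrightarrow> Q0 z * ln (Q0 z / joint PX W z)"
    if z: "z \<in> S0" for z
  proof -
    have q: "Q0 z > 0" using z by (simp add: S0_def)
    have "(\<lambda>n. Qs n z / joint PX W z) \<longlonglongrightarrow> Q0 z / joint PX W z"
      by (rule tendsto_divide[OF Qs_lim tendsto_const]) (use Jpos[OF z] in simp)
    then have "(\<lambda>n. ln (Qs n z / joint PX W z)) \<longlonglongrightarrow> ln (Q0 z / joint PX W z)"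
      by (rule tendsto_ln) (use q Jpos[OF z] in simp)
    then show ?thesis by (rule tendsto_mult[OF Qs_lim])
  qed
  have T2: "(\<lambda>n. Qs n z * ln (Qs n z / (PX (fst z) * (\<Sum>a\<in>UNIV. Qs n (a, snd z)))))
       \<longlonglongrightarrow> Q0 z * ln (Q0 z / (PX (fst z) * (\<Sum>a\<in>UNIV. Q0 (a, snd z))))"
    if z: "z \<in> S0" for z
  proof -
    have q: "Q0 z > 0" using z by (simp add: S0_def)
    have m: "(\<lambda>n. \<Sum>a\<in>UNIV. Qs n (a, snd z)) \<longlonglongrightarrow> (\<Sum>a\<in>UNIV. Q0 (a, snd z))"
      by (rule tendsto_sum) (rule Qs_lim)
    have m2: "(\<lambda>n. PX (fst z) * (\<Sum>a\<in>UNIV. Qs n (a, snd z))) \<longlonglongrightarrow> PX (fst z) * (\<Sum>a\<in>UNIV. Q0 (a, snd z))"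
      by (rule tendsto_mult[OF tendsto_const m])
    have "(\<lambda>n. Qs n z / (PX (fst z) * (\<Sum>a\<in>UNIV. Qs n (a, snd z)))) \<longlonglongrightarrow> Q0 z / (PX (fst z) * (\<Sum>a\<in>UNIV. Q0 (a, snd z)))"
      by (rule tendsto_divide[OF Qs_lim m2]) (use PXpos[OF z] margpos[OF z] in simp)
    then have "(\<lambda>n. ln (Qs n z / (PX (fst z) * (\<Sum>a\<in>UNIV. Qs n (a, snd z))))) \<longlonglongrightarrow> ln (Q0 z / (PX (fst z) * (\<Sum>a\<in>UNIV. Q0 (a, snd z))))"
      by (rule tendsto_ln) (use q PXpos[OF z] margpos[OF z] in simp)
    then show ?thesis by (rule tendsto_mult[OF Qs_lim])
  qed
  have S1: "(\<lambda>n. \<Sum>z\<in>S0. Qs n z * ln (Qs n z / joint PX W z)) \<longlonglongrightarrow> (\<Sum>z\<in>S0. Q0 z * ln (Q0 z / joint PX W z))"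
    by (rule tendsto_sum) (rule T1)
  have S2: "(\<lambda>n. \<Sum>z\<in>S0. Qs n z * ln (Qs n z / (PX (fst z) * (\<Sum>a\<in>UNIV. Qs n (a, snd z)))))
     \<longlonglongrightarrow> (\<Sum>z\<in>S0. Q0 z * ln (Q0 z / (PX (fst z) * (\<Sum>a\<in>UNIV. Q0 (a, snd z)))))"
    by (rule tendsto_sum) (rule T2)
  have "(\<lambda>n. g (Qs n)) \<longlonglongrightarrow> g Q0"
    unfolding g_def
    by (rule tendsto_add[OF S1 tendsto_mult[OF tendsto_const tendsto_max[OF tendsto_const tendsto_diff[OF tendsto_const S2]]]])
  moreover have "\<forall>\<^sub>F n in sequentially. g (Qs n) = fval PX W R (Qs n)"
    unfolding eventually_sequentially
  proof (intro exI[of _ m] allI impI)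
    fix n assume "n \<ge> m"
    then have "{z. Qs n z > 0} = S0" using Qs_pos by (auto simp: S0_def)
    then show "g (Qs n) = fval PX W R (Qs n)" using fg by simp
  qed
  ultimately have lim: "(\<lambda>n. fval PX W R (Qs n)) \<longlonglongrightarrow> g Q0" by (rule Lim_transform_eventually)
  have "g Q0 = fval PX W R Q0" using fg[of Q0] by (simp add: S0_def)
  with lim have lim': "(\<lambda>n. fval PX W R (Qs n)) \<longlonglongrightarrow> fval PX W R Q0" by simp
  show ?thesis
    by (rule exI[of _ Qs], intro conjI allI impI lim') (simp_all add: Qs_types Qs_good)
qed

lemma n_types_finite: "finite (n_types n :: ('a::finite \<Rightarrow> real) set)"
proof (cases "n = 0")
  case True
  then have "n_types n = ({} :: ('a \<Rightarrow> real) set)" by (auto simp: n_types_def)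
  then show ?thesis by simp
next
  case False
  define B where "B = (\<lambda>k. real k / real n) ` {..n}"
  have "n_types n \<subseteq> Pi\<^sub>E UNIV (\<lambda>_::'a. B)"
  proof
    fix Q :: "'a \<Rightarrow> real" assume Q: "Q \<in> n_types n"
    have "Q a \<in> B" for a
    proof -
      from Q obtain k :: nat where k: "Q a = real k / real n" by (auto simp: n_types_def)
      have nn: "\<forall>a. Q a \<ge> 0" and s1: "sum Q UNIV = 1" using Q by (auto simp: n_types_def)
      have "Q a \<le> 1" using member_le_sum[of a UNIV Q] nn s1 by simp
      then have "real k \<le> real n" using k False by (simp add: divide_le_eq_1)
      then show ?thesis using k by (auto simp: B_def)
    qed
    then show "Q \<in> Pi\<^sub>E UNIV (\<lambda>_. B)" by (simp add: PiE_UNIV_domain)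
  qed
  moreover have "finite (Pi\<^sub>E UNIV (\<lambda>_::'a. B))" by (rule finite_PiE) (auto simp: B_def)
  ultimately show ?thesis by (rule finite_subset)
qed

lemma err_lim: "((\<lambda>n. K * (1 + ln (real n)) / real n) \<longlongrightarrow> 0) sequentially"
proof -
  have l1: "((\<lambda>n. ln (real n) / real n) \<longlongrightarrow> 0) sequentially"
    using filterlim_compose[OF ln_x_over_x_tendsto_0 filterlim_real_sequentially] by simp
  have "((\<lambda>n. K * (1 / real n + ln (real n) / real n)) \<longlongrightarrow> K * (0 + 0)) sequentially"
    by (intro tendsto_mult tendsto_const tendsto_add l1 lim_inverse_n')
  moreover have "(\<lambda>n. K * (1 / real n + ln (real n) / real n)) = (\<lambda>n. K * (1 + ln (real n)) / real n)"
    by (rule ext) (simp add: add_divide_distrib[symmetric])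
  ultimately show ?thesis by simp
qed

lemma main_thm:
  fixes PX :: "'x::finite \<Rightarrow> real" and W :: "'x \<Rightarrow> 'y::finite \<Rightarrow> real" and R :: real
  assumes PX: "is_dist PX" and W: "\<And>a. is_dist (W a)" and R0: "R \<ge> 0"
  shows "((\<lambda>n. ereal (- (1 / real n) * ln (Max (Vn PX W R n ` n_types n))))
         \<longlongrightarrow>
         (INF Q\<in>types_infty. rel_ent Q (joint PX W)
              + ereal (1/2) * max 0 (ereal R - rel_ent Q (prod_dist PX (marg_Y Q)))))
        sequentially"
proof -
  define s where "s = (\<lambda>n. - (1 / real n) * ln (Max (Vn PX W R n ` n_types n)))"
  define Fx where "Fx = (\<lambda>Q. rel_ent Q (joint PX W) + ereal (1/2) * max 0 (ereal R - rel_ent Q (prod_dist PX (marg_Y Q))))"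
  define Linf where "Linf = (INF Q\<in>types_infty. Fx Q)"
  define Cst where "Cst = 2 + 2 * real (card (UNIV::'y set)) + real (card (UNIV::('x \<times> 'y) set))"
  define err where "err = (\<lambda>n. Cst * (1 + ln (real n)) / real n)"
  have err0: "err \<longlonglongrightarrow> 0" unfolding err_def by (rule err_lim)
  have PXnn: "PX a \<ge> 0" for a using PX by (simp add: is_dist_def)
  have Wnn: "W a b \<ge> 0" for a b using W[of a] by (simp add: is_dist_def)
  obtain a0 where a0: "PX a0 > 0"
  proof -
    have "\<exists>a. PX a > 0"
    proof (rule ccontr)
      assume "\<not> ?thesis"
      then have "PX = (\<lambda>a. 0)" using PXnn by (intro ext) (metis antisym not_less)
      then show False using PX by (simp add: is_dist_def)
    qed
    then show ?thesis using that by blast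
  qed
  obtain b0 where b0: "W a0 b0 > 0"
  proof -
    have "\<exists>b. W a0 b > 0"
    proof (rule ccontr)
      assume "\<not> ?thesis"
      then have "W a0 = (\<lambda>b. 0)" using Wnn by (intro ext) (metis antisym not_less)
      then show False using W[of a0] by (simp add: is_dist_def)
    qed
    then show ?thesis using that by blast
  qed
  define dl where "dl = (\<lambda>z::'x \<times> 'y. if z = (a0,b0) then 1 else (0::real))"
  have dl_types: "dl \<in> n_types n" if "n \<ge> 1" for n
  proof -
    have "\<exists>k::nat. dl z = real k / real n" for z
      using that by (cases "z = (a0,b0)") (auto simp: dl_def intro!: exI[of _ n] exI[of _ 0])
    moreover have "sum dl UNIV = 1" by (simp add: dl_def)
    ultimately show ?thesis using that by (auto simp: n_types_def dl_def)
  qed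
  have dl_good: "good PX W dl" using a0 b0 by (auto simp: good_def dl_def joint_def split: if_splits)
  have Qnn: "Q z \<ge> 0" if "Q \<in> n_types n" for Q :: "'x \<times> 'y \<Rightarrow> real" and n z
    using that unfolding n_types_def by blast
  have types_inf: "Q \<in> types_infty" if "Q \<in> n_types n" "n \<ge> 1" for Q :: "'x \<times> 'y \<Rightarrow> real" and n
    using that by (auto simp: types_infty_def)
  have Fx_good: "Fx Q = ereal (fval PX W R Q)" if "Q \<in> types_infty" "good PX W Q" for Q
  proof -
    from that(1) obtain n where "Q \<in> n_types n" by (auto simp: types_infty_def)
    then show ?thesis unfolding Fx_def using F_good[OF PX W that(2)] Qnn by blast
  qed
  have Fx_bad: "Fx Q = \<infinity>" if "\<not> good PX W Q" for Q
    unfolding Fx_def using F_bad[OF PX W that] by blast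
  have fin: "finite (Vn PX W R n ` n_types n)" for n by (simp add: n_types_finite)
  have up: "s n \<le> fval PX W R Q + err n" if n1: "n \<ge> 1" and Q: "Q \<in> n_types n" "good PX W Q" for n Q
  proof -
    have gb: "Vn PX W R n Q > 0 \<and> \<bar>ln (Vn PX W R n Q) + real n * fval PX W R Q\<bar> \<le> Cst * (1 + ln n)"
      using good_bound[OF PX W n1 Q] by (simp add: Cst_def)
    have "Vn PX W R n Q \<le> Max (Vn PX W R n ` n_types n)" using fin Q(1) by (intro Max_ge) auto
    then have "ln (Vn PX W R n Q) \<le> ln (Max (Vn PX W R n ` n_types n))" using gb by simp
    then have "- (real n * fval PX W R Q) - Cst * (1 + ln n) \<le> ln (Max (Vn PX W R n ` n_types n))" using gb by linarith
    moreover have npos: "real n > 0" using n1 by simp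
    ultimately have "- ln (Max (Vn PX W R n ` n_types n)) / real n \<le> (real n * fval PX W R Q + Cst * (1 + ln n)) / real n"
      by (intro divide_right_mono) auto
    also have "\<dots> = fval PX W R Q + err n" using npos by (simp add: err_def add_divide_distrib)
    finally show ?thesis by (simp add: s_def)
  qed
  have lo: "\<exists>Q\<in>n_types n. good PX W Q \<and> fval PX W R Q - err n \<le> s n" if n1: "n \<ge> 1" for n
  proof -
    have ne: "Vn PX W R n ` n_types n \<noteq> {}" using dl_types[OF n1] by auto
    obtain Q where Q: "Q \<in> n_types n" and QM: "Vn PX W R n Q = Max (Vn PX W R n ` n_types n)"
      using Max_in[OF fin ne] by auto
    have "Vn PX W R n dl \<le> Vn PX W R n Q" unfolding QM using fin dl_types[OF n1] by (intro Max_ge) auto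
    moreover have "Vn PX W R n dl > 0" using good_bound[OF PX W n1 dl_types[OF n1] dl_good] by blast
    ultimately have Vpos: "Vn PX W R n Q > 0" by linarith
    have gQ: "good PX W Q"
    proof (rule ccontr)
      assume "\<not> good PX W Q"
      then have "Vn PX W R n Q = 0" by (rule bad_zero[OF PX W n1 Q])
      then show False using Vpos by simp
    qed
    have gb: "\<bar>ln (Vn PX W R n Q) + real n * fval PX W R Q\<bar> \<le> Cst * (1 + ln n)"
      using good_bound[OF PX W n1 Q gQ] by (simp add: Cst_def)
    have "ln (Max (Vn PX W R n ` n_types n)) \<le> - (real n * fval PX W R Q) + Cst * (1 + ln n)"
      unfolding QM[symmetric] using gb by linarith
    moreover have npos: "real n > 0" using n1 by simp
    ultimately have "(real n * fval PX W R Q - Cst * (1 + ln n)) / real n \<le> - ln (Max (Vn PX W R n ` n_types n)) / real n"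
      by (intro divide_right_mono) auto
    moreover have "(real n * fval PX W R Q - Cst * (1 + ln n)) / real n = fval PX W R Q - err n"
      using npos by (simp add: err_def diff_divide_distrib)
    ultimately have "fval PX W R Q - err n \<le> s n" by (simp add: s_def)
    then show ?thesis using Q gQ by blast
  qed
  have "((\<lambda>n. ereal (s n)) \<longlongrightarrow> Linf) sequentially"
  proof (rule order_tendstoI)
    fix u assume u: "Linf < u"
    then obtain Q0 where Q0: "Q0 \<in> types_infty" "Fx Q0 < u" unfolding Linf_def by (auto simp: INF_less_iff)
    have gQ0: "good PX W Q0" using Q0(2) Fx_bad by force
    from Q0(1) obtain m where m: "m \<ge> 1" "Q0 \<in> n_types m" by (auto simp: types_infty_def)
    show "\<forall>\<^sub>F n in sequentially. ereal (s n) < u"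
    proof (cases u)
      case PInf then show ?thesis by simp
    next
      case MInf then show ?thesis using u by simp
    next
      case (real u')
      have fu: "fval PX W R Q0 < u'" using Q0(2) Fx_good[OF Q0(1) gQ0] real by simp
      obtain Qs where Qs: "\<forall>n\<ge>m. Qs n \<in> n_types n \<and> good PX W (Qs n)"
        and lim: "(\<lambda>n. fval PX W R (Qs n)) \<longlonglongrightarrow> fval PX W R Q0"
        using approx_seq[OF PX W m(2) m(1) gQ0, of R] by blast
      have "(\<lambda>n. fval PX W R (Qs n) + err n) \<longlonglongrightarrow> fval PX W R Q0 + 0"
        by (rule tendsto_add[OF lim err0])
      then have ev1: "\<forall>\<^sub>F n in sequentially. fval PX W R (Qs n) + err n < u'"
        using fu by (intro order_tendstoD(2)) auto
      have ev2: "\<forall>\<^sub>F n in sequentially. n \<ge> m" by (rule eventually_ge_at_top)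
      show ?thesis
      proof (rule eventually_mono[OF eventually_conj[OF ev1 ev2]])
        fix n assume n: "fval PX W R (Qs n) + err n < u' \<and> m \<le> n"
        then have "s n \<le> fval PX W R (Qs n) + err n" using up[of n "Qs n"] Qs m(1) by auto
        then show "ereal (s n) < u" using n real by simp
      qed
    qed
  next
    fix l assume l: "l < Linf"
    show "\<forall>\<^sub>F n in sequentially. l < ereal (s n)"
    proof (cases l)
      case MInf then show ?thesis by simp
    next
      case PInf then show ?thesis using l by simp
    next
      case (real l')
      have "Linf \<le> Fx dl" unfolding Linf_def using types_inf[OF dl_types[of 1]] by (intro INF_lower) auto
      also have "\<dots> = ereal (fval PX W R dl)" using Fx_good[OF types_inf[OF dl_types[of 1]] dl_good] by simp
      finally have Lfin: "Linf \<le> ereal (fval PX W R dl)" .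
      obtain Lr where Lr: "Linf = ereal Lr" using Lfin l real by (cases Linf) auto
      have lLr: "l' < Lr" using l real Lr by simp
      have ev1: "\<forall>\<^sub>F n in sequentially. err n < Lr - l'"
        using err0 lLr by (intro order_tendstoD(2)) auto
      have ev2: "\<forall>\<^sub>F n in sequentially. n \<ge> 1" by (rule eventually_ge_at_top)
      show ?thesis
      proof (rule eventually_mono[OF eventually_conj[OF ev1 ev2]])
        fix n assume n: "err n < Lr - l' \<and> 1 \<le> n"
        then obtain Q where Q: "Q \<in> n_types n" "good PX W Q" "fval PX W R Q - err n \<le> s n"
          using lo[of n] by auto
        have "ereal Lr \<le> Fx Q" unfolding Lr[symmetric] Linf_def using types_inf[OF Q(1)] n
          by (intro INF_lower) auto
        then have "Lr \<le> fval PX W R Q" using Fx_good[OF types_inf[OF Q(1)] Q(2)] n by simp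
        then show "l < ereal (s n)" using Q(3) n real by simp
      qed
    qed
  qed
  then show ?thesis unfolding s_def Linf_def Fx_def .
qed

theorem lemma14:
  fixes PX :: "'x::finite \<Rightarrow> real" and W :: "'x \<Rightarrow> 'y::finite \<Rightarrow> real" and R :: real
  assumes "is_dist PX"
    and "\<And>a. is_dist (W a)"
    and "R \<ge> 0"
  shows "((\<lambda>n. ereal (- (1 / real n) * ln (Max
            ((\<lambda>Q. 1/2 * real (card (tclass n (marg_Y Q)))
                   * exp_neg (real n) (exp_info W Q)
                   * frakY (exp (real n * R)) n PX Q) ` n_types n))))
         \<longlongrightarrow>
         (INF Q\<in>types_infty. rel_ent Q (joint PX W)
              + ereal (1/2) * max 0 (ereal R - rel_ent Q (prod_dist PX (marg_Y Q)))))
        sequentially"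
proof -
  have eq: "(\<lambda>Q. 1/2 * real (card (tclass n (marg_Y Q)))
                   * exp_neg (real n) (exp_info W Q)
                   * frakY (exp (real n * R)) n PX Q) = Vn PX W R n" for n
    by (rule ext) (simp add: Vn_def)
  show ?thesis unfolding eq by (rule main_thm[OF assms])
qed

end
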